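(* Let $P$ be a finite poset and $Q$ a poset ideal of $P$. Then the natural inclusion $\Delta(P)\subseteq\Delta(P\uplus Q)$ makes the geometric realization of $\Delta(P)$ a deformation retract of that of $\Delta(P\uplus Q)$. In particular, for any field $k$ and every $i$, the induced maps $\tilde H^i(\Delta(P\uplus Q);k)\to\tilde H^i(\Delta(P);k)$ are isomorphisms.
   Context: $\Delta(\cdot)$ denotes the order complex (simplicial complex of chains). A poset ideal $Q$ of $P$ is a subset with $x\in Q$, $y<x$ implying $y\in Q$. The poset $P\uplus Q$ has underlying set $P\cup Q^\ast$, $Q^\ast=\{x^\ast:x\in Q\}$ a disjoint copy of $Q$, with $\alpha<\beta$ iff either $\alpha,\beta\in P$ and $\alpha<\beta$ in $P$; or $\alpha=x^\ast,\beta=y^\ast$ with $x<y$ in $P$; or $\alpha=x^\ast$ with $x\in Q$, $\beta\in P$ and $x\le\beta$ in $P$. *)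

theory Defs
  imports "HOL-Analysis.Analysis"
begin

definition partial_order_rel :: "'a set \<Rightarrow> ('a \<Rightarrow> 'a \<Rightarrow> bool) \<Rightarrow> bool" where
  "partial_order_rel P le \<longleftrightarrow>
     (\<forall>x\<in>P. le x x) \<and>
     (\<forall>x\<in>P. \<forall>y\<in>P. le x y \<and> le y x \<longrightarrow> x = y) \<and>
     (\<forall>x\<in>P. \<forall>y\<in>P. \<forall>z\<in>P. le x y \<and> le y z \<longrightarrow> le x z)"

definition strict_of :: "('a \<Rightarrow> 'a \<Rightarrow> bool) \<Rightarrow> 'a \<Rightarrow> 'a \<Rightarrow> bool" where
  "strict_of le x y \<longleftrightarrow> le x y \<and> x \<noteq> y"

definition poset_ideal :: "'a set \<Rightarrow> ('a \<Rightarrow> 'a \<Rightarrow> bool) \<Rightarrow> 'a set \<Rightarrow> bool" where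
  "poset_ideal P le Q \<longleftrightarrow> Q \<subseteq> P \<and> (\<forall>x\<in>Q. \<forall>y\<in>P. strict_of le y x \<longrightarrow> y \<in> Q)"

definition order_complex :: "'v set \<Rightarrow> ('v \<Rightarrow> 'v \<Rightarrow> bool) \<Rightarrow> 'v set set" where
  "order_complex V lt =
     {C. C \<subseteq> V \<and> finite C \<and> (\<forall>x\<in>C. \<forall>y\<in>C. x \<noteq> y \<longrightarrow> lt x y \<or> lt y x)}"

text \<open>Geometric realization of a simplicial complex K (a family of finite vertex sets):
  the points in barycentric coordinates whose support is a face, with the topology
  induced from the product topology on 'v \<Rightarrow> real.\<close>
definition realization_set :: "'v set set \<Rightarrow> ('v \<Rightarrow> real) set" where
  "realization_set K =
     {x. (\<forall>v. 0 \<le> x v) \<and> {v. x v \<noteq> 0} \<in> K \<and> (\<Sum>v\<in>{v. x v \<noteq> 0}. x v) = 1}"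

definition realization :: "'v set set \<Rightarrow> ('v \<Rightarrow> real) topology" where
  "realization K = subtopology (powertop_real UNIV) (realization_set K)"

text \<open>The poset P \<uplus> Q on P \<union> Q*, encoded as Inl ` P \<union> Inr ` Q (Inr x = x*),
  given by its non-strict order.\<close>
definition uplus_carrier :: "'a set \<Rightarrow> 'a set \<Rightarrow> ('a + 'a) set" where
  "uplus_carrier P Q = Inl ` P \<union> Inr ` Q"

fun uplus_lt :: "('a \<Rightarrow> 'a \<Rightarrow> bool) \<Rightarrow> 'a + 'a \<Rightarrow> 'a + 'a \<Rightarrow> bool" where
  "uplus_lt le (Inl x) (Inl y) = strict_of le x y"
| "uplus_lt le (Inr x) (Inr y) = strict_of le x y"
| "uplus_lt le (Inr x) (Inl y) = le x y"
| "uplus_lt le (Inl x) (Inr y) = False"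

definition incl_map :: "('a \<Rightarrow> real) \<Rightarrow> ('a + 'a \<Rightarrow> real)" where
  "incl_map x = (\<lambda>v. case v of Inl p \<Rightarrow> x p | Inr _ \<Rightarrow> 0)"

definition deformation_retract_of_space :: "'b set \<Rightarrow> 'b topology \<Rightarrow> bool" where
  "deformation_retract_of_space A X \<longleftrightarrow> A \<subseteq> topspace X \<and>
     (\<exists>r. retraction_maps X (subtopology X A) r id \<and>
          homotopic_with (\<lambda>h. \<forall>a\<in>A. h a = a) X X id r)"

end

theory Submission imports Defs begin

lemma topspace_realization[simp]: "topspace (realization K) = realization_set K"
  by (simp add: realization_def)

lemma cont_proj: "continuous_map (realization K) euclideanreal (\<lambda>x. x v)"
  unfolding realization_def
  by (rule continuous_map_from_subtopology) (metis UNIV_I continuous_map_product_projection)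

lemma realI:
  assumes "\<forall>v. 0 \<le> y v" "{v. y v \<noteq> 0} \<in> K" "finite F" "{v. y v \<noteq> 0} \<subseteq> F" "sum y F = 1"
  shows "y \<in> realization_set K"
proof -
  have "sum y {v. y v \<noteq> 0} = sum y F"
    by (rule sum.mono_neutral_left) (use assms in auto)
  with assms show ?thesis by (simp add: realization_set_def)
qed

lemma realD:
  assumes "y \<in> realization_set K" "finite F" "{v. y v \<noteq> 0} \<subseteq> F"
  shows "sum y F = 1" "\<forall>v. 0 \<le> y v" "{v. y v \<noteq> 0} \<in> K"
proof -
  have "sum y {v. y v \<noteq> 0} = sum y F"
    by (rule sum.mono_neutral_left) (use assms in auto)
  with assms show "sum y F = 1" by (simp add: realization_set_def)
qed (use assms in \<open>auto simp: realization_set_def\<close>)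

locale setup6 =
  fixes P Q :: "'a set" and le :: "'a \<Rightarrow> 'a \<Rightarrow> bool"
  assumes finP: "finite P" and po: "partial_order_rel P le" and ide: "poset_ideal P le Q"
begin

lemma QP: "Q \<subseteq> P" using ide by (simp add: poset_ideal_def)
lemma finQ: "finite Q" using QP finP finite_subset by blast
lemma le_refl': "p \<in> P \<Longrightarrow> le p p" using po unfolding partial_order_rel_def by blast
lemma le_antisym': "p \<in> P \<Longrightarrow> q \<in> P \<Longrightarrow> le p q \<Longrightarrow> le q p \<Longrightarrow> p = q"
  using po unfolding partial_order_rel_def by blast
lemma le_trans': "p \<in> P \<Longrightarrow> q \<in> P \<Longrightarrow> r \<in> P \<Longrightarrow> le p q \<Longrightarrow> le q r \<Longrightarrow> le p r"
  using po unfolding partial_order_rel_def by blast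

abbreviation "K1 \<equiv> order_complex P (strict_of le)"
abbreviation "K2 \<equiv> order_complex (uplus_carrier P Q) (uplus_lt le)"
abbreviation "R1 \<equiv> realization_set K1"
abbreviation "R2 \<equiv> realization_set K2"
abbreviation "F \<equiv> Inl ` P \<union> Inr ` Q"

lemma finF: "finite F" using finP finQ by simp

lemma sumF: "sum (y :: 'a + 'a \<Rightarrow> real) F = (\<Sum>p\<in>P. y (Inl p)) + (\<Sum>q\<in>Q. y (Inr q))"
proof -
  have "sum y F = sum y (Inl ` P) + sum y (Inr ` Q)"
    by (rule sum.union_disjoint) (auto simp: finP finQ)
  also have "sum y (Inl ` P) = (\<Sum>p\<in>P. y (Inl p))"
    by (rule sum.reindex_cong[of Inl]) auto
  also have "sum y (Inr ` Q) = (\<Sum>q\<in>Q. y (Inr q))"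
    by (rule sum.reindex_cong[of Inr]) auto
  finally show ?thesis .
qed

lemma R2_supp: "x \<in> R2 \<Longrightarrow> {v. x v \<noteq> 0} \<subseteq> F"
  by (auto simp: realization_set_def order_complex_def uplus_carrier_def)

lemma R2_facts:
  assumes "x \<in> R2"
  shows "\<forall>v. 0 \<le> x v" "(\<Sum>p\<in>P. x (Inl p)) + (\<Sum>q\<in>Q. x (Inr q)) = 1"
    "p \<notin> P \<Longrightarrow> x (Inl p) = 0" "q \<notin> Q \<Longrightarrow> x (Inr q) = 0"
    "\<And>v w. x v \<noteq> 0 \<Longrightarrow> x w \<noteq> 0 \<Longrightarrow> v \<noteq> w \<Longrightarrow> uplus_lt le v w \<or> uplus_lt le w v"
proof -
  show "\<forall>v. 0 \<le> x v" using assms by (simp add: realization_set_def)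
  show "(\<Sum>p\<in>P. x (Inl p)) + (\<Sum>q\<in>Q. x (Inr q)) = 1"
    using realD(1)[OF assms finF R2_supp[OF assms]] sumF by simp
  show "p \<notin> P \<Longrightarrow> x (Inl p) = 0" "q \<notin> Q \<Longrightarrow> x (Inr q) = 0"
    using R2_supp[OF assms] by auto
  show "\<And>v w. x v \<noteq> 0 \<Longrightarrow> x w \<noteq> 0 \<Longrightarrow> v \<noteq> w \<Longrightarrow> uplus_lt le v w \<or> uplus_lt le w v"
    using assms by (auto simp: realization_set_def order_complex_def)
qed


definition SS :: "('a + 'a \<Rightarrow> real) \<Rightarrow> real" where "SS x = (\<Sum>q\<in>Q. x (Inr q))"
definition BB :: "'a \<Rightarrow> ('a + 'a \<Rightarrow> real) \<Rightarrow> real" where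
  "BB q x = (\<Sum>q'\<in>{q'\<in>Q. strict_of le q' q}. x (Inr q'))"
definition HS :: "real \<Rightarrow> ('a + 'a \<Rightarrow> real) \<Rightarrow> 'a \<Rightarrow> real" where
  "HS t x q = max 0 (min (x (Inr q)) ((1-t) * SS x - BB q x))"
definition HH :: "real \<Rightarrow> ('a + 'a \<Rightarrow> real) \<Rightarrow> ('a + 'a \<Rightarrow> real)" where
  "HH t x = (\<lambda>v. case v of Inl p \<Rightarrow> x (Inl p) + (if p \<in> Q then x (Inr p) - HS t x p else 0)
                         | Inr q \<Rightarrow> HS t x q)"

lemma HS_bounds: "x \<in> R2 \<Longrightarrow> 0 \<le> HS t x q \<and> HS t x q \<le> x (Inr q)"
  using R2_facts(1)[of x] by (auto simp: HS_def)

lemma BB_nonneg: "x \<in> R2 \<Longrightarrow> 0 \<le> BB q x"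
  using R2_facts(1)[of x] by (auto simp: BB_def intro: sum_nonneg)

lemma SS_ge: assumes "x \<in> R2" "q \<in> Q" shows "x (Inr q) + BB q x \<le> SS x"
proof -
  have "x (Inr q) + BB q x = (\<Sum>q'\<in>insert q {q'\<in>Q. strict_of le q' q}. x (Inr q'))"
    unfolding BB_def by (subst sum.insert) (auto simp: finQ strict_of_def)
  also have "\<dots> \<le> SS x" unfolding SS_def
    by (rule sum_mono2) (use assms finQ R2_facts(1)[OF assms(1)] in auto)
  finally show ?thesis .
qed

lemma HS0: "x \<in> R2 \<Longrightarrow> HS 0 x q = x (Inr q)"
proof (cases "q \<in> Q")
  case True
  assume x: "x \<in> R2"
  show ?thesis using SS_ge[OF x True] BB_nonneg[OF x, of q] R2_facts(1)[OF x]
    by (auto simp: HS_def)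
next
  case False
  assume x: "x \<in> R2"
  show ?thesis using R2_facts(4)[OF x False] by (auto simp: HS_def)
qed

lemma HS1: "x \<in> R2 \<Longrightarrow> HS 1 x q = 0"
  using BB_nonneg[of x q] by (auto simp: HS_def)

lemma HH0: "x \<in> R2 \<Longrightarrow> HH 0 x = x"
  by (auto simp: HH_def HS0 fun_eq_iff split: sum.split)

lemma HH_fix: assumes "\<forall>q. x (Inr q) = 0" shows "HH t x = x"
proof -
  have "SS x = 0" "\<And>q. BB q x = 0" using assms by (auto simp: SS_def BB_def)
  then have "\<And>q. HS t x q = 0" using assms by (simp add: HS_def)
  then show ?thesis using assms by (auto simp: HH_def fun_eq_iff split: sum.split)
qed


lemma HS_pos_strict:
  assumes x: "x \<in> R2" and pQ: "p \<in> Q" and qQ: "q \<in> Q" and pq: "strict_of le p q"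
    and pos: "HS t x q > 0"
  shows "HS t x p = x (Inr p)"
proof -
  have pP: "p \<in> P" and qP: "q \<in> P" using pQ qQ QP by auto
  have sub: "insert p {q'\<in>Q. strict_of le q' p} \<subseteq> {q'\<in>Q. strict_of le q' q}"
  proof
    fix r assume "r \<in> insert p {q'\<in>Q. strict_of le q' p}"
    then consider "r = p" | "r \<in> Q" "strict_of le r p" by auto
    then show "r \<in> {q'\<in>Q. strict_of le q' q}"
    proof cases
      case 1 then show ?thesis using pq pQ by auto
    next
      case 2
      have rP: "r \<in> P" using 2 QP by auto
      have "le r q" using le_trans'[OF rP pP qP] 2 pq by (auto simp: strict_of_def)
      moreover have "r \<noteq> q"
      proof
        assume "r = q"
        then have "p = q" using le_antisym'[OF pP qP] 2 pq by (auto simp: strict_of_def)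
        then show False using pq by (simp add: strict_of_def)
      qed
      ultimately show ?thesis using 2 by (auto simp: strict_of_def)
    qed
  qed
  have "x (Inr p) + BB p x = (\<Sum>q'\<in>insert p {q'\<in>Q. strict_of le q' p}. x (Inr q'))"
    unfolding BB_def by (subst sum.insert) (auto simp: finQ strict_of_def)
  also have "\<dots> \<le> BB q x" unfolding BB_def
    by (rule sum_mono2) (use sub finQ R2_facts(1)[OF x] in auto)
  finally have le1: "x (Inr p) + BB p x \<le> BB q x" .
  have "(1-t) * SS x - BB q x > 0" using pos by (auto simp: HS_def)
  then have "(1-t) * SS x - BB p x \<ge> x (Inr p)" using le1 by linarith
  then show ?thesis using R2_facts(1)[OF x] by (auto simp: HS_def)
qed

lemma HH_R2:
  assumes x: "x \<in> R2"
  shows "HH t x \<in> R2"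
proof -
  note nn = R2_facts(1)[OF x]
  note hb = HS_bounds[OF x, of t]
  define y where "y = HH t x"
  have y_nn: "\<forall>v. 0 \<le> y v"
    using nn hb by (auto simp: y_def HH_def split: sum.split)
  have suppF: "{v. y v \<noteq> 0} \<subseteq> F"
  proof
    fix v assume v: "v \<in> {v. y v \<noteq> 0}"
    show "v \<in> F"
    proof (cases v)
      case (Inl p)
      show ?thesis
      proof (rule ccontr)
        assume "v \<notin> F"
        then have "p \<notin> P" "p \<notin> Q" using Inl QP by auto
        then show False using v Inl R2_facts(3)[OF x] by (auto simp: y_def HH_def)
      qed
    next
      case (Inr q)
      show ?thesis
      proof (rule ccontr)
        assume "v \<notin> F"
        then have "q \<notin> Q" using Inr by auto
        then show False using v Inr R2_facts(4)[OF x] hb[of q] by (auto simp: y_def HH_def)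
      qed
    qed
  qed
  have sum1: "sum y F = 1"
  proof -
    have "sum y F = (\<Sum>p\<in>P. x (Inl p) + (if p \<in> Q then x (Inr p) - HS t x p else 0))
                   + (\<Sum>q\<in>Q. HS t x q)"
      by (simp add: sumF y_def HH_def)
    also have "(\<Sum>p\<in>P. x (Inl p) + (if p \<in> Q then x (Inr p) - HS t x p else 0))
        = (\<Sum>p\<in>P. x (Inl p)) + (\<Sum>p\<in>Q. x (Inr p) - HS t x p)"
      by (simp add: sum.distrib sum.If_cases finP Int_absorb1[OF QP] Int_commute[of P Q])
    also have "(\<Sum>p\<in>Q. x (Inr p) - HS t x p) = (\<Sum>p\<in>Q. x (Inr p)) - (\<Sum>p\<in>Q. HS t x p)"
      by (simp add: sum_subtractf)
    finally show ?thesis using R2_facts(2)[OF x] by simp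
  qed
  have supp_cases_l: "x (Inl p) \<noteq> 0 \<or> (p \<in> Q \<and> HS t x p < x (Inr p))" if "y (Inl p) \<noteq> 0" for p
    using that hb[of p] by (auto simp: y_def HH_def split: if_splits)
  have supp_cases_r: "x (Inr q) \<noteq> 0 \<and> HS t x q > 0" if "y (Inr q) \<noteq> 0" for q
    using that hb[of q] by (auto simp: y_def HH_def)
  note ch = R2_facts(5)[OF x]
  have chain: "uplus_lt le v w \<or> uplus_lt le w v"
    if v: "y v \<noteq> 0" and w: "y w \<noteq> 0" and vw: "v \<noteq> w" for v w
  proof -
    have lr: "le q p" if a: "y (Inl p) \<noteq> 0" and b: "y (Inr q) \<noteq> 0" for p q
    proof -
      have b': "x (Inr q) \<noteq> 0" "HS t x q > 0" using supp_cases_r[OF b] by auto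
      have qQ: "q \<in> Q" using b' R2_facts(4)[OF x] by auto
      from supp_cases_l[OF a] show ?thesis
      proof
        assume "x (Inl p) \<noteq> 0"
        then show ?thesis using ch[of "Inl p" "Inr q"] b' by auto
      next
        assume c: "p \<in> Q \<and> HS t x p < x (Inr p)"
        show ?thesis
        proof (cases "p = q")
          case True then show ?thesis using qQ QP le_refl' by auto
        next
          case False
          have "x (Inr p) \<noteq> 0" using c hb[of p] by auto
          then have "strict_of le p q \<or> strict_of le q p" using ch[of "Inr p" "Inr q"] b' False by auto
          then show ?thesis
          proof
            assume "strict_of le p q"
            then have "HS t x p = x (Inr p)" using HS_pos_strict[OF x _ qQ _ b'(2)] c by auto
            then show ?thesis using c by simp
          qed (simp add: strict_of_def)
        qed
      qed
    qed
    have ll: "strict_of le p p' \<or> strict_of le p' p" if a: "y (Inl p) \<noteq> 0" and b: "y (Inl p') \<noteq> 0"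
      and ne: "p \<noteq> p'" for p p'
    proof -
      have h1: "x (Inl p) \<noteq> 0 \<Longrightarrow> x (Inl p') \<noteq> 0 \<Longrightarrow> strict_of le p p' \<or> strict_of le p' p"
        using ch[of "Inl p" "Inl p'"] ne by auto
      have h2: "strict_of le p p' \<or> strict_of le p' p"
        if "x (Inl p) \<noteq> 0" "x (Inr p') \<noteq> 0" "p \<noteq> p'" for p p'
        using ch[of "Inl p" "Inr p'"] that by (auto simp: strict_of_def)
      have h3: "strict_of le p p' \<or> strict_of le p' p"
        if "x (Inr p) \<noteq> 0" "x (Inr p') \<noteq> 0" "p \<noteq> p'" for p p'
        using ch[of "Inr p" "Inr p'"] that by auto
      have a': "x (Inl p) \<noteq> 0 \<or> x (Inr p) \<noteq> 0" using supp_cases_l[OF a] hb[of p] by auto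
      have b': "x (Inl p') \<noteq> 0 \<or> x (Inr p') \<noteq> 0" using supp_cases_l[OF b] hb[of p'] by auto
      show ?thesis using a' b' h1 h2[of p p'] h2[of p' p] h3[of p p'] ne by auto
    qed
    show ?thesis
    proof (cases v)
      case (Inl p)
      show ?thesis
      proof (cases w)
        case (Inl p')
        then show ?thesis using ll[of p p'] v w vw \<open>v = Inl p\<close> by auto
      next
        case (Inr q)
        then show ?thesis using lr[of p q] v w \<open>v = Inl p\<close> by auto
      qed
    next
      case (Inr q)
      show ?thesis
      proof (cases w)
        case (Inl p')
        then show ?thesis using lr[of p' q] v w \<open>v = Inr q\<close> by auto
      next
        case (Inr q')
        then show ?thesis using ch[of v w] supp_cases_r v w vw \<open>v = Inr q\<close> by auto
      qed
    qed
  qed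
  have inK: "{v. y v \<noteq> 0} \<in> K2"
    unfolding order_complex_def
    using suppF chain finite_subset[OF suppF finF] by (auto simp: uplus_carrier_def)
  show ?thesis unfolding y_def[symmetric]
    by (rule realI[OF y_nn inK finF suppF sum1])
qed


abbreviation "Z \<equiv> prod_topology (top_of_set {0..1::real}) (realization K2)"

lemma cfst: "continuous_map Z euclideanreal fst"
  by (rule continuous_map_into_fulltopology[OF continuous_map_fst])

lemma cproj: "continuous_map Z euclideanreal (\<lambda>z. snd z w)"
  using continuous_map_compose[OF continuous_map_snd cont_proj[of K2 w]] by (simp add: o_def)

lemma cSS: "continuous_map Z euclideanreal (\<lambda>z. SS (snd z))"
  unfolding SS_def by (rule continuous_map_sum[OF finQ cproj])

lemma cBB: "continuous_map Z euclideanreal (\<lambda>z. BB q (snd z))"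
  unfolding BB_def by (rule continuous_map_sum[OF _ cproj]) (simp add: finQ)

lemma cHS: "continuous_map Z euclideanreal (\<lambda>z. HS (fst z) (snd z) q)"
  unfolding HS_def
  by (intro continuous_map_real_max continuous_map_real_min continuous_map_diff
      continuous_map_real_mult cSS cBB cproj cfst continuous_map_const[THEN iffD2]) auto

lemma cHH: "continuous_map Z (realization K2) (\<lambda>z. HH (fst z) (snd z))"
proof -
  have "continuous_map Z (powertop_real UNIV) (\<lambda>z. HH (fst z) (snd z))"
    unfolding continuous_map_componentwise_UNIV
  proof
    fix v
    show "continuous_map Z euclideanreal (\<lambda>z. HH (fst z) (snd z) v)"
    proof (cases v)
      case (Inl p)
      show ?thesis
      proof (cases "p \<in> Q")
        case True
        then show ?thesis unfolding HH_def Inl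
          by (simp, intro continuous_map_add continuous_map_diff cproj cHS)
      next
        case False
        then show ?thesis unfolding HH_def Inl by (simp add: cproj)
      qed
    next
      case (Inr q)
      then show ?thesis unfolding HH_def by (simp add: cHS)
    qed
  qed
  moreover have "(\<lambda>z. HH (fst z) (snd z)) \<in> topspace Z \<rightarrow> R2"
    using HH_R2 by auto
  ultimately show ?thesis by (simp add: realization_def continuous_map_in_subtopology)
qed


lemma R1_supp: "y \<in> R1 \<Longrightarrow> {p. y p \<noteq> 0} \<subseteq> P"
  by (auto simp: realization_set_def order_complex_def)

lemma incl_R2: assumes y: "y \<in> R1" shows "incl_map y \<in> R2"
proof -
  have supp: "{v. incl_map y v \<noteq> 0} = Inl ` {p. y p \<noteq> 0}"
  proof (rule set_eqI)
    fix v show "v \<in> {v. incl_map y v \<noteq> 0} \<longleftrightarrow> v \<in> Inl ` {p. y p \<noteq> 0}"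
      by (cases v) (auto simp: incl_map_def)
  qed
  have s1: "sum y P = 1" using realD(1)[OF y finP R1_supp[OF y]] .
  have nn: "\<forall>p. 0 \<le> y p" using y by (simp add: realization_set_def)
  have K: "{p. y p \<noteq> 0} \<in> K1" using y by (simp add: realization_set_def)
  show ?thesis
  proof (rule realI[OF _ _ finF])
    show "\<forall>v. 0 \<le> incl_map y v" using nn by (auto simp: incl_map_def split: sum.split)
    show "{v. incl_map y v \<noteq> 0} \<subseteq> F" using supp R1_supp[OF y] by auto
    show "sum (incl_map y) F = 1" using s1 by (simp add: sumF incl_map_def)
    show "{v. incl_map y v \<noteq> 0} \<in> K2" unfolding supp using K
      by (auto simp: order_complex_def uplus_carrier_def)
  qed
qed

lemma A_char: "incl_map ` R1 = {z \<in> R2. \<forall>q. z (Inr q) = 0}"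
proof
  show "incl_map ` R1 \<subseteq> {z \<in> R2. \<forall>q. z (Inr q) = 0}"
    using incl_R2 by (auto simp: incl_map_def)
next
  show "{z \<in> R2. \<forall>q. z (Inr q) = 0} \<subseteq> incl_map ` R1"
  proof
    fix z assume "z \<in> {z \<in> R2. \<forall>q. z (Inr q) = 0}"
    then have z: "z \<in> R2" and z0: "\<forall>q. z (Inr q) = 0" by auto
    define w where "w = (\<lambda>p. z (Inl p))"
    have eq: "z = incl_map w" by (auto simp: w_def incl_map_def z0 fun_eq_iff split: sum.split)
    have wsupp: "{p. w p \<noteq> 0} \<subseteq> P" using R2_facts(3)[OF z] by (auto simp: w_def)
    have "w \<in> R1"
    proof (rule realI[OF _ _ finP wsupp])
      show "\<forall>v. 0 \<le> w v" using R2_facts(1)[OF z] by (simp add: w_def)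
      show "sum w P = 1" using R2_facts(2)[OF z] z0 by (simp add: w_def)
      show "{p. w p \<noteq> 0} \<in> K1"
        using wsupp finite_subset[OF wsupp finP] R2_facts(5)[OF z]
        by (fastforce simp: order_complex_def w_def)
    qed
    then show "z \<in> incl_map ` R1" using eq by blast
  qed
qed

lemma embed: "embedding_map (realization K1) (realization K2) incl_map"
  unfolding embedding_map_def homeomorphic_map_maps
proof (intro exI[of _ "\<lambda>z p. z (Inl p)"], unfold homeomorphic_maps_def, intro conjI)
  have ci: "continuous_map (realization K1) (powertop_real UNIV) incl_map"
    unfolding continuous_map_componentwise_UNIV
  proof
    fix v show "continuous_map (realization K1) euclideanreal (\<lambda>x. incl_map x v)"
      by (cases v) (simp_all add: incl_map_def cont_proj)
  qed
  show "continuous_map (realization K1)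
     (subtopology (realization K2) (incl_map ` topspace (realization K1))) incl_map"
    using ci incl_R2 by (auto simp: realization_def continuous_map_in_subtopology)
  have cg: "continuous_map (subtopology (realization K2) (incl_map ` topspace (realization K1)))
      (powertop_real UNIV) (\<lambda>z p. z (Inl p))"
    unfolding continuous_map_componentwise_UNIV
    by (intro allI continuous_map_from_subtopology cont_proj)
  show "continuous_map (subtopology (realization K2) (incl_map ` topspace (realization K1)))
     (realization K1) (\<lambda>z p. z (Inl p))"
    using cg unfolding realization_def[of K1] continuous_map_in_subtopology
    by (auto simp: incl_map_def)
  show "\<forall>x\<in>topspace (realization K1). (\<lambda>z p. z (Inl p)) (incl_map x) = x"
    by (simp add: incl_map_def)
  show "\<forall>y\<in>topspace (subtopology (realization K2) (incl_map ` topspace (realization K1))).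
       incl_map ((\<lambda>z p. z (Inl p)) y) = y"
    by (auto simp: incl_map_def fun_eq_iff split: sum.split)
qed

lemma defo: "deformation_retract_of_space (incl_map ` R1) (realization K2)"
proof -
  let ?A = "incl_map ` R1"
  let ?X = "realization K2"
  define r where "r = (\<lambda>x. HH 1 x)"
  have cr: "continuous_map ?X ?X r"
  proof -
    have "continuous_map ?X Z (\<lambda>x. (1, x))"
      by (intro continuous_map_pairedI) auto
    from continuous_map_compose[OF this cHH] show ?thesis by (simp add: r_def o_def)
  qed
  have rA: "r x \<in> ?A" if "x \<in> R2" for x
    unfolding A_char using HH_R2[OF that] HS1[OF that] by (simp add: r_def HH_def)
  have ret: "retraction_maps ?X (subtopology ?X ?A) r id"
    unfolding retraction_maps_def
  proof (intro conjI)
    show "continuous_map ?X (subtopology ?X ?A) r"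
      using cr rA by (auto simp: continuous_map_in_subtopology)
    show "continuous_map (subtopology ?X ?A) ?X id"
      by (rule continuous_map_from_subtopology[OF continuous_map_id])
    show "\<forall>x\<in>topspace (subtopology ?X ?A). r (id x) = x"
      using A_char HH_fix by (auto simp: r_def)
  qed
  define h where "h = (\<lambda>z. if fst z = (0::real) then snd z else HH (fst z) (snd z))"
  have hom: "homotopic_with (\<lambda>g. \<forall>a\<in>?A. g a = a) ?X ?X id r"
    unfolding homotopic_with_def
  proof (intro exI[of _ h] conjI)
    show "continuous_map Z ?X h"
      by (rule continuous_map_eq[OF cHH]) (auto simp: h_def HH0)
    show "\<forall>x. h (0, x) = id x" by (simp add: h_def)
    show "\<forall>x. h (1, x) = r x" by (simp add: h_def r_def)
    show "\<forall>t\<in>{0..1}. \<forall>a\<in>?A. h (t, a) = a"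
      using A_char HH_fix by (auto simp: h_def)
  qed
  have "?A \<subseteq> topspace ?X" using A_char by auto
  then show ?thesis unfolding deformation_retract_of_space_def using ret hom by blast
qed

end

theorem lemma6p5:
  fixes P Q :: "'a set" and le :: "'a \<Rightarrow> 'a \<Rightarrow> bool"
  assumes "finite P" and "partial_order_rel P le" and "poset_ideal P le Q"
  shows "embedding_map (realization (order_complex P (strict_of le)))
            (realization (order_complex (uplus_carrier P Q) (uplus_lt le))) incl_map
       \<and> deformation_retract_of_space
            (incl_map ` realization_set (order_complex P (strict_of le)))
            (realization (order_complex (uplus_carrier P Q) (uplus_lt le)))"
proof -
  interpret setup6 P Q le using assms by (unfold_locales)
  show ?thesis using embed defo by blast
qed

end
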